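(* Let $\mathcal{G}_R(\mathcal{N}_R,\mathcal{E}_R)$ be an R-graph rooted at $n_{dst}$ with ingress points $\mathcal{M}$, and let $\mathcal{G}'_R$ be the graph obtained from it by the shortest-path transformation described in the context. Let $f$ and $f'$ be the certain routing functions computed on $\mathcal{G}_R$ and $\mathcal{G}'_R$ respectively. Then $\{i\in\mathcal{N}_R: f(i)\neq 0\}\subseteq\{i\in\mathcal{N}_R: f'(i)\neq 0\}$, i.e., applying the transformation can only increase (not decrease) the set of nodes with certain routes.
   Context: An R-graph is a directed acyclic graph $\mathcal{G}_R(\mathcal{N}_R,\mathcal{E}_R)$ rooted at a destination node $n_{dst}$; an edge $j\to i$ means $i$ may use the routing path learned from its parent $j$; $P_i=\{j:e_{ji}\in\mathcal{E}_R\}$. $n_{dst}$ has a finite set $\mathcal{M}$ of ingress points, and each child of $n_{dst}$ is attached to exactly one ingress point. Certain routing function $f:\mathcal{N}_R\to\mathcal{M}\cup\{0\}$ on a given R-graph: for children $i$ of $n_{dst}$, $f(i)$ is their ingress point; visiting the remaining nodes (other than $n_{dst}$) in a topological order, let $CR_i=\{f(j):j\in P_i\}$; set $f(i)=0$ if $0\in CR_i$ or $|CR_i|\neq 1$, and otherwise set $f(i)$ to the unique element of $CR_i$. Shortest-path transformation: set $L_{n_{dst}}=0$ and $L_i=\infty$ for all other nodes; visiting the nodes other than $n_{dst}$ in a topological order, set $L_i=\min\{L_i,\min_{j\in P_i}(L_j+1)\}$ and then remove from $\mathcal{E}_R$ every edge $j\to i$ with $L_j+1>L_i$. *)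

theory Defs
  imports Main "HOL-Library.Extended_Nat"
begin

text \<open>Nodes have type 'a; an edge (j, i) \<in> E means j \<rightarrow> i (i may use the path learned from parent j).
  Ingress points are positive naturals (0 encodes "no certain route").\<close>

definition parents :: "('a \<times> 'a) set \<Rightarrow> 'a \<Rightarrow> 'a set" where
  "parents E i = {j. (j, i) \<in> E}"

definition rgraph :: "'a set \<Rightarrow> ('a \<times> 'a) set \<Rightarrow> 'a \<Rightarrow> nat set \<Rightarrow> ('a \<Rightarrow> nat) \<Rightarrow> bool" where
  "rgraph N E dst M ing \<longleftrightarrow>
     finite N \<and> dst \<in> N \<and> E \<subseteq> N \<times> N \<and> acyclic E \<and>
     (\<forall>i\<in>N. (dst, i) \<in> E\<^sup>*) \<and>
     finite M \<and> 0 \<notin> M \<and> (\<forall>i. (dst, i) \<in> E \<longrightarrow> ing i \<in> M)"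

definition topo_order :: "'a set \<Rightarrow> ('a \<times> 'a) set \<Rightarrow> 'a \<Rightarrow> 'a list \<Rightarrow> bool" where
  "topo_order N E dst ord \<longleftrightarrow>
     distinct ord \<and> set ord = N - {dst} \<and>
     (\<forall>a b. a < length ord \<longrightarrow> b < length ord \<longrightarrow> (ord ! a, ord ! b) \<in> E \<longrightarrow> a < b)"

definition routing_step :: "('a \<times> 'a) set \<Rightarrow> 'a \<Rightarrow> 'a \<Rightarrow> ('a \<Rightarrow> nat) \<Rightarrow> ('a \<Rightarrow> nat)" where
  "routing_step E dst i f =
     (if (dst, i) \<in> E then f
      else (let CR = f ` parents E i in
            if 0 \<in> CR \<or> card CR \<noteq> 1 then f(i := 0) else f(i := the_elem CR)))"

definition routing :: "('a \<times> 'a) set \<Rightarrow> 'a \<Rightarrow> ('a \<Rightarrow> nat) \<Rightarrow> 'a list \<Rightarrow> 'a \<Rightarrow> nat" where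
  "routing E dst ing ord =
     fold (routing_step E dst) ord (\<lambda>i. if (dst, i) \<in> E then ing i else 0)"

definition sp_step :: "'a \<Rightarrow> ('a \<Rightarrow> enat) \<times> ('a \<times> 'a) set \<Rightarrow> ('a \<Rightarrow> enat) \<times> ('a \<times> 'a) set" where
  "sp_step i st =
     (let L = fst st; E = snd st;
          L' = L(i := min (L i) (INF j\<in>parents E i. L j + 1))
      in (L', E - {(j, i) | j. (j, i) \<in> E \<and> L' j + 1 > L' i}))"

definition sp_transform :: "('a \<times> 'a) set \<Rightarrow> 'a \<Rightarrow> 'a list \<Rightarrow> ('a \<times> 'a) set" where
  "sp_transform E dst ord =
     snd (fold sp_step ord (\<lambda>i. if i = dst then 0 else \<infinity>, E))"

end

theory Submission imports Defs begin

lemma sp_step_E_sub: "snd (sp_step x (L,Ec)) \<subseteq> Ec"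
  by (auto simp: sp_step_def Let_def)
lemma sp_step_E_other: "k \<noteq> x \<Longrightarrow> ((j,k) \<in> snd (sp_step x (L,Ec))) = ((j,k)\<in>Ec)"
  by (auto simp: sp_step_def Let_def)
lemma sp_step_L_other: "k \<noteq> x \<Longrightarrow> fst (sp_step x (L,Ec)) k = L k"
  by (auto simp: sp_step_def Let_def)

lemma sp_step_par:
  assumes "L x = \<infinity>" "finite (parents Ec x)" "parents Ec x \<noteq> {}" "(x,x)\<notin>Ec"
  shows "\<exists>j. (j,x) \<in> snd (sp_step x (L,Ec))"
proof -
  let ?P = "parents Ec x"
  let ?S = "(\<lambda>j. L j + 1) ` ?P"
  have fin: "finite ?S" "?S \<noteq> {}" using assms by auto
  have "Min ?S \<in> ?S" using Min_in[OF fin] .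
  then obtain j where j: "j \<in> ?P" and jm: "L j + 1 = Min ?S" by auto
  have inf: "(INF j\<in>?P. L j + 1) = L j + 1" using cInf_eq_Min[OF fin] jm by simp
  have "j \<noteq> x" using j assms(4) by (auto simp: parents_def)
  then have "(j,x) \<in> snd (sp_step x (L,Ec))"
    using j inf assms(1) by (auto simp: sp_step_def Let_def parents_def)
  then show ?thesis by blast
qed

lemma sp_step_child:
  assumes "L x = \<infinity>" "L dst = 0" "(dst,x)\<in>Ec" "x \<noteq> dst"
  shows "(dst,x) \<in> snd (sp_step x (L,Ec))"
proof -
  have "(1::enat) \<le> (INF j\<in>parents Ec x. L j + 1)"
    by (rule INF_greatest) (simp add: enat_0_less_mult_iff ileI1 one_eSuc plus_1_eSuc(2))
  then show ?thesis using assms by (auto simp: sp_step_def Let_def)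
qed




lemma sp_fold:
  assumes "distinct xs" "dst \<notin> set xs" "fold sp_step xs (L,Ec) = (L',Ec')"
  shows "Ec' \<subseteq> Ec \<and> (\<forall>j k. k \<notin> set xs \<longrightarrow> ((j,k)\<in>Ec') = ((j,k)\<in>Ec))
    \<and> (\<forall>k. k \<notin> set xs \<longrightarrow> L' k = L k)
    \<and> (\<forall>i\<in>set xs. L i = \<infinity> \<longrightarrow> finite (parents Ec i) \<longrightarrow> parents Ec i \<noteq> {} \<longrightarrow> (i,i)\<notin>Ec
          \<longrightarrow> parents Ec' i \<noteq> {})
    \<and> (\<forall>i\<in>set xs. L i = \<infinity> \<longrightarrow> L dst = 0 \<longrightarrow> (dst,i)\<in>Ec \<longrightarrow> (dst,i)\<in>Ec')"
  using assms
proof (induction xs arbitrary: L Ec)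
  case Nil
  then show ?case by simp
next
  case (Cons x xs)
  obtain L1 Ec1 where st: "sp_step x (L,Ec) = (L1,Ec1)" by (cases "sp_step x (L,Ec)")
  have f: "fold sp_step xs (L1,Ec1) = (L',Ec')" using Cons.prems st by simp
  note IH = Cons.IH[OF _ _ f]
  have d: "distinct xs" "dst \<notin> set xs" "x \<notin> set xs" "x \<noteq> dst" using Cons.prems by auto
  note IH' = IH[OF d(1,2)]
  have E1: "Ec1 \<subseteq> Ec" using sp_step_E_sub[of x L Ec] st by simp
  have E1o: "\<And>j k. k \<noteq> x \<Longrightarrow> ((j,k)\<in>Ec1) = ((j,k)\<in>Ec)" using sp_step_E_other[of _ x _ L Ec] st by simp
  have L1o: "\<And>k. k \<noteq> x \<Longrightarrow> L1 k = L k" using sp_step_L_other[of _ x L Ec] st by simp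
  have P1o: "\<And>k. k \<noteq> x \<Longrightarrow> parents Ec1 k = parents Ec k" using E1o by (auto simp: parents_def)
  show ?case
  proof (intro conjI)
    show "Ec' \<subseteq> Ec" using IH' E1 by blast
    show "\<forall>j k. k \<notin> set (x # xs) \<longrightarrow> ((j, k) \<in> Ec') = ((j, k) \<in> Ec)" using IH' E1o by auto
    show "\<forall>k. k \<notin> set (x # xs) \<longrightarrow> L' k = L k" using IH' L1o by auto
    show "\<forall>i\<in>set (x # xs). L i = \<infinity> \<longrightarrow> finite (parents Ec i) \<longrightarrow> parents Ec i \<noteq> {} \<longrightarrow> (i, i) \<notin> Ec \<longrightarrow> parents Ec' i \<noteq> {}"
    proof (intro ballI impI)
      fix i assume i: "i \<in> set (x#xs)" "L i = \<infinity>" "finite (parents Ec i)" "parents Ec i \<noteq> {}" "(i, i) \<notin> Ec"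
      show "parents Ec' i \<noteq> {}"
      proof (cases "i = x")
        case True
        then obtain j where "(j,x) \<in> Ec1" using sp_step_par[of L x Ec] i st by auto
        then have "(j,x) \<in> Ec'" using IH' d(3) by blast
        then show ?thesis using True by (auto simp: parents_def)
      next
        case False
        then show ?thesis using IH' i L1o P1o E1o by auto
      qed
    qed
    show "\<forall>i\<in>set (x # xs). L i = \<infinity> \<longrightarrow> L dst = 0 \<longrightarrow> (dst, i) \<in> Ec \<longrightarrow> (dst, i) \<in> Ec'"
    proof (intro ballI impI)
      fix i assume i: "i \<in> set (x#xs)" "L i = \<infinity>" "L dst = 0" "(dst, i) \<in> Ec"
      show "(dst, i) \<in> Ec'"
      proof (cases "i = x")
        case True
        then have "(dst,x) \<in> Ec1" using sp_step_child[of L x dst Ec] i st d by auto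
        then show ?thesis using IH' d(3) True by blast
      next
        case False
        then show ?thesis using IH' i L1o E1o d by auto
      qed
    qed
  qed
qed

lemma fold_rs_other: "k \<notin> set ys \<Longrightarrow> fold (routing_step E dst) ys s k = s k"
  by (induction ys arbitrary: s) (auto simp: routing_step_def Let_def)

lemma topo_before:
  assumes "topo_order N E dst ord" "ord = as @ i # bs" "(j,i) \<in> E" "j \<in> set ord"
  shows "j \<in> set as"
proof (rule ccontr)
  assume "j \<notin> set as"
  then have "j \<in> set (i#bs)" using assms(2,4) by auto
  then obtain t where t: "t < length (i#bs)" "(i#bs)!t = j" by (metis in_set_conv_nth)
  have "ord ! (length as + t) = j" using t assms(2) by (simp add: nth_append)
  moreover have "ord ! (length as) = i" using assms(2) by simp
  moreover have "length as + t < length ord" "length as < length ord" using t assms(2) by auto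
  ultimately have "length as + t < length as" using assms(1,3) unfolding topo_order_def by blast
  then show False by simp
qed

lemma routing_char:
  assumes "topo_order N E dst ord" "E \<subseteq> N \<times> N" "i \<in> set ord"
  shows "routing E dst ing ord i = (if (dst,i) \<in> E then ing i else
     (let CR = routing E dst ing ord ` parents E i in
            if 0 \<in> CR \<or> card CR \<noteq> 1 then 0 else the_elem CR))"
proof -
  obtain as bs where ob: "ord = as @ i # bs" using split_list[OF assms(3)] by blast
  have dis: "distinct ord" using assms(1) by (simp add: topo_order_def)
  define s0 where "s0 = (\<lambda>i. if (dst, i) \<in> E then ing i else 0)"
  define S where "S = fold (routing_step E dst) as s0"
  have g: "routing E dst ing ord = fold (routing_step E dst) bs (routing_step E dst i S)"
    unfolding routing_def S_def s0_def ob by simp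
  have ib: "i \<notin> set bs" "i \<notin> set as" using dis ob by auto
  have gi: "routing E dst ing ord i = routing_step E dst i S i" using g fold_rs_other ib by metis
  have Si: "S i = s0 i" unfolding S_def using fold_rs_other ib by metis
  show ?thesis
  proof (cases "(dst,i) \<in> E")
    case True
    then show ?thesis using gi Si by (simp add: routing_step_def s0_def)
  next
    case False
    have "\<And>j. j \<in> parents E i \<Longrightarrow> routing E dst ing ord j = S j"
    proof -
      fix j assume j: "j \<in> parents E i"
      then have "(j,i) \<in> E" by (simp add: parents_def)
      moreover have "j \<noteq> dst" using False calculation by auto
      moreover have "j \<in> N" using assms(2) calculation by auto
      ultimately have "j \<in> set ord" using assms(1) by (auto simp: topo_order_def)
      then have "j \<in> set as" using topo_before[OF assms(1) ob \<open>(j,i)\<in>E\<close>] by blast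
      then have "j \<notin> set (i#bs)" using dis ob by auto
      then show "routing E dst ing ord j = S j" using g fold_rs_other[of j bs] by (auto simp: routing_step_def Let_def)
    qed
    then have "routing E dst ing ord ` parents E i = S ` parents E i" by auto
    then show ?thesis using gi False by (simp add: routing_step_def Let_def)
  qed
qed



theorem theorem3p4:
  fixes N :: "'a set" and E :: "('a \<times> 'a) set" and dst :: 'a
    and M :: "nat set" and ing :: "'a \<Rightarrow> nat"
    and ord1 ord2 ord3 :: "'a list"
  assumes "rgraph N E dst M ing"
    and "topo_order N E dst ord1"
    and "topo_order N E dst ord2"
    and "topo_order N (sp_transform E dst ord2) dst ord3"
  shows "{i \<in> N. routing E dst ing ord1 i \<noteq> 0}
         \<subseteq> {i \<in> N. routing (sp_transform E dst ord2) dst ing ord3 i \<noteq> 0}"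
proof -
  define E' where "E' = sp_transform E dst ord2"
  define L0 where "L0 = (\<lambda>i. if i = dst then 0 else (\<infinity>::enat))"
  obtain L' where fo: "fold sp_step ord2 (L0, E) = (L', E')"
    unfolding E'_def sp_transform_def L0_def by (metis prod.collapse)
  have rg: "finite N" "dst \<in> N" "E \<subseteq> N \<times> N" "acyclic E" "\<forall>i\<in>N. (dst, i) \<in> E\<^sup>*"
    using assms(1) by (auto simp: rgraph_def)
  have o2: "distinct ord2" "set ord2 = N - {dst}" using assms(3) by (auto simp: topo_order_def)
  have finE: "finite E" using rg(1,3) finite_subset by blast
  note SP = sp_fold[OF o2(1) _ fo, of dst]
  have SP': "E' \<subseteq> E \<and> (\<forall>i\<in>set ord2. L0 i = \<infinity> \<longrightarrow> finite (parents E i) \<longrightarrow> parents E i \<noteq> {} \<longrightarrow> (i,i)\<notin>E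
          \<longrightarrow> parents E' i \<noteq> {})
    \<and> (\<forall>i\<in>set ord2. L0 i = \<infinity> \<longrightarrow> L0 dst = 0 \<longrightarrow> (dst,i)\<in>E \<longrightarrow> (dst,i)\<in>E')"
    using SP o2 by auto
  have noself: "\<And>i. (i,i) \<notin> E" using rg(4) by (auto simp: acyclic_def)
  have Esub: "E' \<subseteq> E" using SP' by blast
  have finP: "\<And>i. finite (parents E i)"
  proof -
    fix i have "parents E i \<subseteq> fst ` E" by (force simp: parents_def)
    then show "finite (parents E i)" using finE finite_subset by blast
  qed
  have parne: "\<And>i. i \<in> N \<Longrightarrow> i \<noteq> dst \<Longrightarrow> parents E i \<noteq> {}"
  proof -
    fix i assume i: "i \<in> N" "i \<noteq> dst"
    then have "(dst,i) \<in> E\<^sup>+" using rg(5) rtranclD by metis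
    then obtain j where "(j,i) \<in> E" by (meson tranclD2)
    then show "parents E i \<noteq> {}" by (auto simp: parents_def)
  qed
  have par': "\<And>i. i \<in> N \<Longrightarrow> i \<noteq> dst \<Longrightarrow> parents E' i \<noteq> {}"
    using SP' o2 noself finP parne L0_def by auto
  have child': "\<And>i. (dst,i) \<in> E \<Longrightarrow> (dst,i) \<in> E'"
  proof -
    fix i assume a: "(dst,i) \<in> E"
    then have "i \<in> N" "i \<noteq> dst" using rg(3) noself by auto
    then show "(dst,i) \<in> E'" using SP' o2 a L0_def by auto
  qed
  have E'sub: "E' \<subseteq> N \<times> N" using Esub rg(3) by blast
  have o3: "set ord3 = N - {dst}" using assms(4) by (auto simp: topo_order_def E'_def)
  have o1: "set ord1 = N - {dst}" using assms(2) by (auto simp: topo_order_def)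
  define f where "f = routing E dst ing ord1"
  define f' where "f' = routing E' dst ing ord3"
  have f0: "f dst = 0" unfolding f_def routing_def using fold_rs_other[of dst ord1] o1 noself by auto
  have wfE: "wf E" using finite_acyclic_wf[OF finE rg(4)] .
  have main: "\<And>i. i \<in> N \<Longrightarrow> f i \<noteq> 0 \<Longrightarrow> f' i = f i"
  proof -
    fix i show "i \<in> N \<Longrightarrow> f i \<noteq> 0 \<Longrightarrow> f' i = f i"
    proof (induction i rule: wf_induct_rule[OF wfE])
      case (1 i)
      have idst: "i \<noteq> dst" using 1 f0 by auto
      have fi: "f i = (if (dst,i) \<in> E then ing i else
         (let CR = f ` parents E i in if 0 \<in> CR \<or> card CR \<noteq> 1 then 0 else the_elem CR))"
        unfolding f_def using routing_char[OF assms(2) rg(3)] o1 1(2) idst by blast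
      have fi': "f' i = (if (dst,i) \<in> E' then ing i else
         (let CR = f' ` parents E' i in if 0 \<in> CR \<or> card CR \<noteq> 1 then 0 else the_elem CR))"
        unfolding f'_def using routing_char[OF assms(4)[folded E'_def] E'sub] o3 1(2) idst by blast
      show ?case
      proof (cases "(dst,i) \<in> E")
        case True
        then show ?thesis using fi fi' child' by auto
      next
        case False
        then have F': "(dst,i) \<notin> E'" using Esub by blast
        let ?CR = "f ` parents E i"
        have "\<not> (0 \<in> ?CR \<or> card ?CR \<noteq> 1)" using fi False 1(3) by (auto simp: Let_def split: if_splits)
        then obtain c where c: "?CR = {c}" "c \<noteq> 0" by (auto simp: card_1_singleton_iff)
        then have fic: "f i = c" using fi False by (simp add: Let_def)
        have "\<And>j. j \<in> parents E' i \<Longrightarrow> f' j = c"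
        proof -
          fix j assume j: "j \<in> parents E' i"
          then have jE: "(j,i) \<in> E" using Esub by (auto simp: parents_def)
          then have "f j = c" using c by (auto simp: parents_def)
          moreover have "j \<in> N" using jE rg(3) by auto
          ultimately show "f' j = c" using 1(1)[OF jE] c(2) by auto
        qed
        then have "f' ` parents E' i = {c}" using par'[OF 1(2) idst] by blast
        then show ?thesis using fi' F' fic c(2) by (simp add: Let_def)
      qed
    qed
  qed
  show ?thesis using main unfolding f_def f'_def E'_def by auto
qed

end
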